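(* Let $N\ge 1$, $\lambda>0$, and let $(X_t^{\lambda,\mathbf{x},\mathbf{v}},V_t^{\lambda,\mathbf{v}})$ and $\bar X_t^{\mathbf{x},\mathbf{v}}$ be as described in the context. For every $t>0$ there exist constants $K>0$ (possibly depending on $t$, but independent of $\lambda$) and $c_1>0$ such that $$\left|\mathbb{E}\big[f(X_t^{\lambda,\mathbf{x},\mathbf{v}})\big]-\mathbb{E}\big[f(\bar X_t^{\mathbf{x},\mathbf{v}})\big]\right|\le K\|f\|\left(\frac{1}{\sqrt{\lambda}}+e^{-c_1\sqrt{\lambda}}\right)$$ for all $\lambda>0$, all $\mathbf{x}\in\mathbb{R}^N$, all $\mathbf{v}\in\{-1,+1\}^N$ and all $f\in C^1_b(\mathbb{R}^N)$, where $\|f\|:=\|f\|_\infty+\sum_{i=1}^N\|\partial_{x_i}f\|_\infty$.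
   Context: State space $\chi=\{-1,1\}^N$; $\mathbf{e}:=(1,\dots,1)\in\chi$. For $\mathbf{v}=(v_1,\dots,v_N)\in\chi$ let $\mathbf{v}_{(i)}:=(v_1,\dots,-v_i,\dots,v_N)$. Let $\mathcal{P}$ be a transition matrix on $\chi$ such that $\mathcal{P}(\mathbf{e},\mathbf{e})=\mathcal{P}(-\mathbf{e},-\mathbf{e})=1$ and, for every $\mathbf{v}\neq\pm\mathbf{e}$, $\mathcal{P}(\mathbf{v},\mathbf{v}')>0$ if $\mathbf{v}'=\mathbf{v}_{(i)}$ for some $1\le i\le N$ and $\mathcal{P}(\mathbf{v},\mathbf{v}')=0$ otherwise. The fast process $V_t^{\lambda,\mathbf{v}}$ is the càdlàg continuous-time Markov chain on $\chi$ with $V_0^{\lambda,\mathbf{v}}=\mathbf{v}$ which, each time a homogeneous Poisson clock of rate $N\lambda$ rings, jumps according to $\mathcal{P}$. The slow process solves $\frac{d}{dt}X_t^{\lambda,\mathbf{x},\mathbf{v}}=V_t^{\lambda,\mathbf{v}}$, $X_0^{\lambda,\mathbf{x},\mathbf{v}}=\mathbf{x}\in\mathbb{R}^N$. Let $q(\mathbf{v})\in[0,1]$ be the probability that $V^{\lambda,\mathbf{v}}$ is eventually absorbed in $-\mathbf{e}$ (this does not depend on $\lambda$; with probability one the chain is absorbed in $\mathbf{e}$ or $-\mathbf{e}$). The averaged process is $\bar X_t^{\mathbf{x},\mathbf{v}}=\mathbf{x}+t\zeta^{\mathbf{v}}$, where $\zeta^{\mathbf{v}}$ is a random variable equal to $-\mathbf{e}$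 with probability $q(\mathbf{v})$ and to $\mathbf{e}$ with probability $1-q(\mathbf{v})$; thus $\mathbb{E}[f(\bar X_t^{\mathbf{x},\mathbf{v}})]=q(\mathbf{v})f(\mathbf{x}-t\mathbf{e})+(1-q(\mathbf{v}))f(\mathbf{x}+t\mathbf{e})$. $C^1_b(\mathbb{R}^N)$ denotes the bounded continuous real functions with bounded continuous first derivatives. *)

theory Defs
  imports "HOL-Probability.Probability"
begin

text \<open>States: vectors in real^'n with all coordinates in {-1,1}; N = CARD('n).\<close>

definition chi :: "(real^'n) set" where
  "chi = {v. \<forall>i. v $ i = 1 \<or> v $ i = -1}"

definition ones :: "real^'n" where
  "ones = (\<chi> i. 1)"

definition flip :: "'n \<Rightarrow> real^'n \<Rightarrow> real^'n" where
  "flip i v = (\<chi> j. if j = i then - (v $ j) else v $ j)"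

definition flip_kernel :: "(real^'n \<Rightarrow> real^'n \<Rightarrow> real) \<Rightarrow> bool" where
  "flip_kernel P \<longleftrightarrow>
     (\<forall>v\<in>chi. \<forall>w\<in>chi. P v w \<ge> 0) \<and>
     (\<forall>v\<in>chi. (\<Sum>w\<in>chi. P v w) = 1) \<and>
     P ones ones = 1 \<and> P (- ones) (- ones) = 1 \<and>
     (\<forall>v\<in>chi. v \<noteq> ones \<and> v \<noteq> - ones \<longrightarrow>
        (\<forall>w\<in>chi. ((\<exists>i. w = flip i v) \<longrightarrow> P v w > 0) \<and>
                  ((\<nexists>i. w = flip i v) \<longrightarrow> P v w = 0)))"

fun Pn :: "(real^'n \<Rightarrow> real^'n \<Rightarrow> real) \<Rightarrow> nat \<Rightarrow> real^'n \<Rightarrow> real^'n \<Rightarrow> real" where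
  "Pn P 0 v w = (if v = w then 1 else 0)"
| "Pn P (Suc n) v w = (\<Sum>u\<in>chi. Pn P n v u * P u w)"

text \<open>Absorption probability in -e (-e is absorbing, so Pn P n v (-e) increases to it).\<close>
definition absorb_prob :: "(real^'n \<Rightarrow> real^'n \<Rightarrow> real) \<Rightarrow> real^'n \<Rightarrow> real" where
  "absorb_prob P v = lim (\<lambda>n. Pn P n v (- ones))"

text \<open>Transition probabilities at time t of the chain jumping according to P at the
  rings of a Poisson clock of rate N*lam (uniformization formula).\<close>
definition Pt :: "(real^'n \<Rightarrow> real^'n \<Rightarrow> real) \<Rightarrow> real \<Rightarrow> real \<Rightarrow> real^'n \<Rightarrow> real^'n \<Rightarrow> real" where
  "Pt P lam t v w = (\<Sum>n. exp (- (real CARD('n) * lam * t)) * (real CARD('n) * lam * t) ^ n / fact n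
                         * Pn P n v w)"

definition cadlag :: "(real \<Rightarrow> 'b::topological_space) \<Rightarrow> bool" where
  "cadlag g \<longleftrightarrow> (\<forall>s\<ge>0. continuous (at_right s) g) \<and>
                 (\<forall>s>0. \<exists>l. (g \<longlongrightarrow> l) (at_left s))"

text \<open>V is (a version of) the fast process V^{lam,v} on the probability space M:
  cadlag chi-valued paths, V_0 = v, and finite-dimensional distributions of the
  continuous-time Markov chain with transition function Pt.\<close>
definition fast_process ::
  "(real^'n \<Rightarrow> real^'n \<Rightarrow> real) \<Rightarrow> real \<Rightarrow> real^'n \<Rightarrow> 'a measure \<Rightarrow> (real \<Rightarrow> 'a \<Rightarrow> real^'n) \<Rightarrow> bool" where
  "fast_process P lam v M V \<longleftrightarrow>
     prob_space M \<and>
     (\<forall>t\<ge>0. V t \<in> measurable M (count_space UNIV)) \<and>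
     (\<forall>\<omega>\<in>space M. V 0 \<omega> = v \<and> (\<forall>t\<ge>0. V t \<omega> \<in> chi) \<and> cadlag (\<lambda>t. V t \<omega>)) \<and>
     (\<forall>(n::nat) (ts::nat \<Rightarrow> real) (ws::nat \<Rightarrow> real^'n).
        0 \<le> ts 0 \<longrightarrow> (\<forall>i<n. ts i < ts (Suc i)) \<longrightarrow> (\<forall>i\<le>n. ws i \<in> chi) \<longrightarrow>
        measure M {\<omega>\<in>space M. \<forall>i\<le>n. V (ts i) \<omega> = ws i} =
          (\<Prod>i\<le>n. Pt P lam (ts i - (if i = 0 then 0 else ts (i - 1)))
                              (if i = 0 then v else ws (i - 1)) (ws i)))"

definition slow_process :: "(real \<Rightarrow> 'a \<Rightarrow> real^'n) \<Rightarrow> real^'n \<Rightarrow> real \<Rightarrow> 'a \<Rightarrow> real^'n" where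
  "slow_process V x t \<omega> = x + integral {0..t} (\<lambda>s. V s \<omega>)"

definition C1b :: "(real^'n \<Rightarrow> real) \<Rightarrow> (real^'n \<Rightarrow> real^'n \<Rightarrow> real) \<Rightarrow> bool" where
  "C1b f f' \<longleftrightarrow> continuous_on UNIV f \<and> bounded (range f) \<and>
     (\<forall>x. (f has_derivative f' x) (at x)) \<and>
     (\<forall>i. continuous_on UNIV (\<lambda>x. f' x (axis i 1)) \<and> bounded (range (\<lambda>x. f' x (axis i 1))))"

definition C1norm :: "(real^'n \<Rightarrow> real) \<Rightarrow> (real^'n \<Rightarrow> real^'n \<Rightarrow> real) \<Rightarrow> real" where
  "C1norm f f' = (SUP x. \<bar>f x\<bar>) + (\<Sum>i\<in>UNIV. SUP x. \<bar>f' x (axis i 1)\<bar>)"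

end

theory Submission
  imports Defs
begin


lemma finite_chi[simp]: "finite (chi :: (real^'n) set)"
proof -
  have "chi \<subseteq> (\<lambda>b::'n\<Rightarrow>bool. (\<chi> i. if b i then (1::real) else -1)) ` UNIV"
  proof
    fix v :: "real^'n" assume "v \<in> chi"
    then have eq: "v = (\<chi> i. if v $ i = 1 then (1::real) else -1)"
      unfolding chi_def by (auto simp: vec_eq_iff)
    then show "v \<in> range (\<lambda>b::'n\<Rightarrow>bool. (\<chi> i. if b i then (1::real) else -1))" by (rule image_eqI[where x="\<lambda>i. v $ i = 1"]) (use eq in simp_all)
  qed
  then show ?thesis by (rule finite_subset) simp
qed

lemma ones_chi[simp]: "ones \<in> chi" "- ones \<in> chi"
  by (auto simp: chi_def ones_def)

lemma ones_neq[simp]: "ones \<noteq> - (ones::real^'n)" "- ones \<noteq> (ones::real^'n)"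
  by (auto simp: ones_def vec_eq_iff)

lemma flip_chi: "v \<in> chi \<Longrightarrow> flip i v \<in> chi"
  by (auto simp: chi_def flip_def)

lemma sd1: "finite S \<Longrightarrow> (\<Sum>u\<in>S. (if u = a then 1 else 0) * g u) = (if a \<in> S then g a else (0::real))"
  by (simp add: if_distrib[of "\<lambda>x. x * _"] sum.delta cong: if_cong)
lemma sd2: "finite S \<Longrightarrow> (\<Sum>u\<in>S. (if a = u then 1 else 0) * g u) = (if a \<in> S then g a else (0::real))"
  by (simp add: if_distrib[of "\<lambda>x. x * _"] sum.delta' cong: if_cong)
lemma sd3: "finite S \<Longrightarrow> (\<Sum>u\<in>S. g u * (if u = a then 1 else 0)) = (if a \<in> S then g a else (0::real))"
  by (simp add: if_distrib[of "\<lambda>x. _ * x"] sum.delta cong: if_cong)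
lemma sd4: "finite S \<Longrightarrow> (\<Sum>u\<in>S. g u * (if a = u then 1 else 0)) = (if a \<in> S then g a else (0::real))"
  by (simp add: if_distrib[of "\<lambda>x. _ * x"] sum.delta' cong: if_cong)
lemma sd5: "finite S \<Longrightarrow> (\<Sum>u\<in>S. (if a = u then 1 else 0)) = (if a \<in> S then 1 else (0::real))"
  by (simp add: sum.delta')

context fixes P :: "real^'n \<Rightarrow> real^'n \<Rightarrow> real" assumes FK: "flip_kernel P"
begin

lemma P_nonneg: "v \<in> chi \<Longrightarrow> w \<in> chi \<Longrightarrow> P v w \<ge> 0"
  using FK by (auto simp: flip_kernel_def)

lemma P_sum: "v \<in> chi \<Longrightarrow> (\<Sum>w\<in>chi. P v w) = 1"
  using FK by (auto simp: flip_kernel_def)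

lemma P_absorb:
  assumes "a = ones \<or> a = - ones" "w \<in> chi"
  shows "P a w = (if w = a then 1 else 0)"
proof -
  have a: "a \<in> chi" "P a a = 1" using assms FK by (auto simp: flip_kernel_def)
  have s: "(\<Sum>u\<in>chi. P a u) = 1" using P_sum a by blast
  have "(\<Sum>u\<in>chi. P a u) = P a a + (\<Sum>u\<in>chi-{a}. P a u)"
    using sum.remove[OF finite_chi a(1), where g="P a"] by simp
  then have z: "(\<Sum>u\<in>chi-{a}. P a u) = 0" using s a by simp
  have "\<forall>u\<in>chi-{a}. P a u = 0"
    using sum_nonneg_eq_0_iff[where A="chi-{a}" and f="P a"] z P_nonneg a by auto
  then show ?thesis using a assms by auto
qed

lemma Pn_nonneg: "v \<in> chi \<Longrightarrow> w \<in> chi \<Longrightarrow> Pn P n v w \<ge> 0"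
  by (induction n arbitrary: w) (auto intro!: sum_nonneg mult_nonneg_nonneg P_nonneg)

lemma Pn_sum: "v \<in> chi \<Longrightarrow> (\<Sum>w\<in>chi. Pn P n v w) = 1"
proof (induction n)
  case 0 then show ?case using finite_chi by (simp add: sum.delta')
next
  case (Suc n)
  have "(\<Sum>w\<in>chi. Pn P (Suc n) v w) = (\<Sum>w\<in>chi. \<Sum>u\<in>chi. Pn P n v u * P u w)" by simp
  also have "\<dots> = (\<Sum>u\<in>chi. \<Sum>w\<in>chi. Pn P n v u * P u w)" by (rule sum.swap)
  also have "\<dots> = (\<Sum>u\<in>chi. Pn P n v u * (\<Sum>w\<in>chi. P u w))"
    by (simp add: sum_distrib_left)
  also have "\<dots> = (\<Sum>u\<in>chi. Pn P n v u)" by (simp add: P_sum)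
  finally show ?case using Suc by simp
qed

lemma Pn_le1: "v \<in> chi \<Longrightarrow> w \<in> chi \<Longrightarrow> Pn P n v w \<le> 1"
proof -
  assume a: "v \<in> chi" "w \<in> chi"
  have "Pn P n v w \<le> (\<Sum>u\<in>chi. Pn P n v u)"
    using a by (intro member_le_sum) (auto simp: finite_chi Pn_nonneg)
  then show ?thesis using Pn_sum a by simp
qed

lemma Pn_absorb:
  assumes "a = ones \<or> a = - ones"
  shows "w \<in> chi \<Longrightarrow> Pn P n a w = (if w = a then 1 else 0)"
proof (induction n arbitrary: w)
  case 0 then show ?case by (simp only: Pn.simps) auto
next
  case (Suc n)
  have ac: "a \<in> chi" using assms by auto
  have "Pn P (Suc n) a w = (\<Sum>u\<in>chi. Pn P n a u * P u w)" by (simp only: Pn.simps)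
  also have "\<dots> = (\<Sum>u\<in>chi. (if u = a then 1 else 0) * P u w)"
    by (rule sum.cong[OF refl]) (simp only: Suc.IH)
  also have "\<dots> = P a w" using ac by (simp only: sd1 finite_chi if_True)
  finally show ?case using P_absorb[OF assms(1) Suc.prems] by simp
qed

lemma Pn_CK: "w \<in> chi \<Longrightarrow> Pn P (m + n) v w = (\<Sum>u\<in>chi. Pn P m v u * Pn P n u w)"
proof (induction n arbitrary: w)
  case 0 then show ?case using finite_chi by (simp add: sd3 sd4)
next
  case (Suc n)
  have "Pn P (m + Suc n) v w = (\<Sum>u'\<in>chi. Pn P (m+n) v u' * P u' w)" by simp
  also have "\<dots> = (\<Sum>u'\<in>chi. (\<Sum>u\<in>chi. Pn P m v u * Pn P n u u') * P u' w)"
    using Suc by simp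
  also have "\<dots> = (\<Sum>u'\<in>chi. \<Sum>u\<in>chi. Pn P m v u * (Pn P n u u' * P u' w))"
    by (simp add: sum_distrib_right mult.assoc)
  also have "\<dots> = (\<Sum>u\<in>chi. \<Sum>u'\<in>chi. Pn P m v u * (Pn P n u u' * P u' w))" by (rule sum.swap)
  also have "\<dots> = (\<Sum>u\<in>chi. Pn P m v u * (\<Sum>u'\<in>chi. Pn P n u u' * P u' w))"
    by (simp add: sum_distrib_left)
  finally show ?case by simp
qed

lemma Pn_one: "v \<in> chi \<Longrightarrow> Pn P 1 v w = P v w"
proof -
  assume v: "v \<in> chi"
  show ?thesis using v finite_chi by (simp add: sd1 sd2)
qed

lemma Pn_Suc_left: "v \<in> chi \<Longrightarrow> w \<in> chi \<Longrightarrow> Pn P (Suc n) v w = (\<Sum>u\<in>chi. P v u * Pn P n u w)"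
proof -
  assume v: "v \<in> chi" and w: "w \<in> chi"
  have "Pn P (Suc n) v w = Pn P (1+n) v w" by simp
  also have "\<dots> = (\<Sum>u\<in>chi. Pn P 1 v u * Pn P n u w)" by (rule Pn_CK[OF w])
  also have "\<dots> = (\<Sum>u\<in>chi. P v u * Pn P n u w)" by (simp only: Pn_one[OF v])
  finally show ?thesis .
qed

end


definition Tr :: "(real^'n) set" where "Tr = chi - {ones, - ones}"

lemma finite_Tr[simp]: "finite Tr" by (simp add: Tr_def)
lemma Tr_sub: "Tr \<subseteq> chi" by (auto simp: Tr_def)

definition cntm :: "real^'n \<Rightarrow> nat" where "cntm u = card {i. u $ i = -1}"

lemma cntm_le: "cntm (u::real^'n) \<le> CARD('n)"
  unfolding cntm_def by (rule card_mono) auto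

lemma cntm0: "u \<in> chi \<Longrightarrow> cntm u = 0 \<Longrightarrow> u = ones"
  unfolding cntm_def chi_def ones_def by (auto simp: vec_eq_iff)

context fixes P :: "real^'n \<Rightarrow> real^'n \<Rightarrow> real" assumes FK: "flip_kernel P"
begin

lemma P_flip_pos: "u \<in> chi \<Longrightarrow> u \<noteq> ones \<Longrightarrow> u \<noteq> - ones \<Longrightarrow> P u (flip i u) > 0"
  using FK flip_chi[of u i] unfolding flip_kernel_def by blast

lemma reach: "u \<in> chi \<Longrightarrow> u \<noteq> - ones \<Longrightarrow> Pn P (cntm u) u ones > 0"
proof (induction "cntm u" arbitrary: u)
  case 0 then show ?case using cntm0[of u] by simp
next
  case (Suc k)
  then have "{i. u $ i = -1} \<noteq> {}" unfolding cntm_def by (metis card.empty nat.simps(3))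
  then obtain i where i: "u $ i = -1" by auto
  have uo: "u \<noteq> ones" using i by (auto simp: ones_def)
  define u' where "u' = flip i u"
  have u'c: "u' \<in> chi" using flip_chi Suc.prems u'_def by blast
  have u'i: "u' $ i = 1" using i by (simp add: u'_def flip_def)
  have u'n: "u' \<noteq> - ones" using u'i by (auto simp: ones_def)
  have "{j. u' $ j = -1} = {j. u $ j = -1} - {i}" using i by (auto simp: u'_def flip_def)
  then have "cntm u' = k" using Suc.hyps(2) i unfolding cntm_def by simp
  then have pos: "Pn P k u' ones > 0" using Suc.hyps(1) u'c u'n by metis
  have Ppos: "P u u' > 0" using P_flip_pos Suc.prems uo u'_def by blast
  have "P u u' * Pn P k u' ones \<le> (\<Sum>x\<in>chi. P u x * Pn P k x ones)"
    by (rule member_le_sum[where f="\<lambda>x. P u x * Pn P k x ones"])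
       (use u'c Suc.prems in \<open>auto intro!: mult_nonneg_nonneg P_nonneg[OF FK] Pn_nonneg[OF FK]\<close>)
  also have "\<dots> = Pn P (Suc k) u ones" using Pn_Suc_left[OF FK Suc.prems(1) ones_chi(1)] by simp
  finally show ?case using Suc.hyps(2) pos Ppos
    by (metis mult_pos_pos order_less_le_trans)
qed

lemma reachN: "u \<in> chi \<Longrightarrow> u \<noteq> - ones \<Longrightarrow> Pn P CARD('n) u ones > 0"
proof -
  assume u: "u \<in> chi" "u \<noteq> - ones"
  obtain r where r: "CARD('n) = cntm u + r" using cntm_le le_Suc_ex by blast
  have "Pn P (cntm u) u ones * Pn P r ones ones \<le> (\<Sum>x\<in>chi. Pn P (cntm u) u x * Pn P r x ones)"
    by (rule member_le_sum[where f="\<lambda>x. Pn P (cntm u) u x * Pn P r x ones"])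
       (use u in \<open>auto intro!: mult_nonneg_nonneg Pn_nonneg[OF FK]\<close>)
  also have "\<dots> = Pn P CARD('n) u ones" using Pn_CK[OF FK ones_chi(1)] r by simp
  finally show ?thesis using reach[OF u] Pn_absorb[OF FK, of ones ones r] by simp
qed

lemma dl_exists: "\<exists>dl. 0 < dl \<and> dl \<le> 1/2 \<and> (\<forall>u\<in>(Tr::(real^'n) set). dl \<le> Pn P CARD('n) u ones)"
proof (cases "Tr = ({}::(real^'n) set)")
  case True then show ?thesis by (intro exI[of _ "1/2"]) auto
next
  case False
  let ?S = "(\<lambda>u. Pn P CARD('n) u ones) ` (Tr::(real^'n) set)"
  have pos: "Min ?S > 0" using False reachN by (auto simp: Tr_def)
  show ?thesis
    by (intro exI[of _ "min (1/2) (Min ?S)"]) (use pos in \<open>auto intro!: min.coboundedI2 Min_le\<close>)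
qed

definition T :: "nat \<Rightarrow> real^'n \<Rightarrow> real" where "T n v = (\<Sum>w\<in>Tr. Pn P n v w)"

lemma T_split: "v \<in> chi \<Longrightarrow> Pn P n v ones + Pn P n v (- ones) + T n v = 1"
proof -
  assume v: "v \<in> chi"
  have e: "chi = insert ones (insert (- ones) (Tr::(real^'n) set))" by (auto simp: Tr_def)
  have "(\<Sum>w\<in>chi. Pn P n v w) = (\<Sum>w\<in>insert ones (insert (- ones) Tr). Pn P n v w)"
    by (subst e) (rule refl)
  also have "\<dots> = Pn P n v ones + Pn P n v (- ones) + T n v"
    by (simp add: T_def Tr_def)
  finally have "(\<Sum>w\<in>chi. Pn P n v w) = Pn P n v ones + Pn P n v (- ones) + T n v" .
  then show ?thesis using Pn_sum[OF FK v] by simp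
qed

lemma T_nonneg: "v \<in> chi \<Longrightarrow> T n v \<ge> 0"
  unfolding T_def using Tr_sub by (auto intro!: sum_nonneg Pn_nonneg[OF FK])

lemma T_le1: "v \<in> chi \<Longrightarrow> T n v \<le> 1"
  using T_split[of v n] Pn_nonneg[OF FK, of v ones n] Pn_nonneg[OF FK, of v "- ones" n] by simp

lemma T_absorb: "a = ones \<or> a = - ones \<Longrightarrow> T n a = 0"
  unfolding T_def using Tr_sub by (auto intro!: sum.neutral simp: Pn_absorb[OF FK] Tr_def)

lemma T_step:
  assumes v: "v \<in> chi" and dl: "\<forall>u\<in>(Tr::(real^'n) set). dl \<le> Pn P CARD('n) u ones"
  shows "T (n + CARD('n)) v \<le> (1 - dl) * T n v"
proof -
  have "T (n + CARD('n)) v = (\<Sum>w\<in>Tr. \<Sum>u\<in>chi. Pn P n v u * Pn P CARD('n) u w)"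
    unfolding T_def using Tr_sub by (intro sum.cong refl Pn_CK[OF FK]) auto
  also have "\<dots> = (\<Sum>u\<in>chi. \<Sum>w\<in>Tr. Pn P n v u * Pn P CARD('n) u w)" by (rule sum.swap)
  also have "\<dots> = (\<Sum>u\<in>chi. Pn P n v u * T CARD('n) u)" by (simp add: T_def sum_distrib_left)
  also have "\<dots> \<le> (\<Sum>u::real^'n\<in>chi. (1 - dl) * (if u \<in> Tr then Pn P n v u else 0))"
  proof (rule sum_mono)
    fix u :: "real^'n" assume u: "u \<in> chi"
    show "Pn P n v u * T CARD('n) u \<le> (1 - dl) * (if u \<in> Tr then Pn P n v u else 0)"
    proof (cases "u \<in> Tr")
      case True
      have "T CARD('n) u \<le> 1 - dl"
      proof -
        have "dl \<le> Pn P CARD('n) u ones" using dl True by blast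
        moreover have "0 \<le> Pn P CARD('n) u (- ones)" using Pn_nonneg[OF FK u, of "- ones"] by simp
        ultimately show ?thesis using T_split[OF u, of "CARD('n)"] by linarith
      qed
      then have "Pn P n v u * T CARD('n) u \<le> Pn P n v u * (1 - dl)"
        using Pn_nonneg[OF FK v u, of n] by (rule mult_left_mono)
      then show ?thesis using True by (simp add: mult.commute)
    next
      case False
      then have "u = ones \<or> u = - ones" using u by (auto simp: Tr_def)
      then show ?thesis using False T_absorb by simp
    qed
  qed
  also have "\<dots> = (1 - dl) * T n v"
    using Tr_sub by (simp add: sum_distrib_left[symmetric] sum.If_cases T_def Int_absorb1[OF Tr_sub])
  finally show ?thesis .
qed

lemma T_pow:
  assumes v: "v \<in> chi" and dl: "\<forall>u\<in>Tr. dl \<le> Pn P CARD('n) u ones" "dl \<le> 1"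
  shows "T (k * CARD('n) + r) v \<le> (1 - dl) ^ k"
proof (induction k)
  case 0 then show ?case using T_le1[OF v] by simp
next
  case (Suc k)
  have "T (Suc k * CARD('n) + r) v = T ((k * CARD('n) + r) + CARD('n)) v" by (simp add: algebra_simps)
  also have "\<dots> \<le> (1 - dl) * T (k * CARD('n) + r) v" by (rule T_step[OF v dl(1)])
  also have "\<dots> \<le> (1 - dl) * (1 - dl) ^ k" using Suc dl(2) by (intro mult_left_mono) auto
  finally show ?case by simp
qed

lemma T_geo:
  assumes v: "v \<in> chi" and dl: "\<forall>u\<in>Tr. dl \<le> Pn P CARD('n) u ones" "0 < dl" "dl \<le> 1/2"
  shows "T n v \<le> 2 * ((1 - dl) powr (1 / CARD('n))) ^ n"
proof -
  let ?N = "CARD('n)" let ?r = "(1 - dl) powr (1 / ?N)"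
  have N: "?N > 0" by simp
  have r0: "0 < ?r" "?r \<le> 1" using dl by (auto simp: powr_le1)
  have rN: "?r ^ ?N = 1 - dl"
    using dl by (simp add: powr_realpow[symmetric] powr_powr)
  have "T n v = T ((n div ?N) * ?N + n mod ?N) v" by simp
  also have "\<dots> \<le> (1 - dl) ^ (n div ?N)" by (rule T_pow[OF v dl(1)]) (use dl in simp)
  also have "\<dots> \<le> 2 * ?r ^ n"
  proof -
    have "?r ^ n = ?r ^ (?N * (n div ?N)) * ?r ^ (n mod ?N)"
      by (simp add: power_add[symmetric])
    also have "\<dots> \<ge> (1 - dl) ^ (n div ?N) * (1 - dl)"
    proof -
      have "?r ^ (n mod ?N) \<ge> ?r ^ ?N" using r0 by (intro power_decreasing) (auto intro: less_imp_le)
      moreover have "?r ^ (?N * (n div ?N)) = (1 - dl) ^ (n div ?N)" by (simp add: power_mult rN)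
      ultimately show ?thesis using rN dl r0 by (simp add: mult_left_mono)
    qed
    finally have "(1 - dl) ^ (n div ?N) * (1 - dl) \<le> ?r ^ n" .
    moreover have "(1 - dl) ^ (n div ?N) \<le> 2 * ((1 - dl) ^ (n div ?N) * (1 - dl))"
      using dl by (simp add: mult_left_mono)
    ultimately show ?thesis by linarith
  qed
  finally show ?thesis .
qed

end


definition pw :: "real \<Rightarrow> nat \<Rightarrow> real" where "pw \<mu> n = exp (- \<mu>) * \<mu> ^ n / fact n"

lemma pw_nonneg: "\<mu> \<ge> 0 \<Longrightarrow> pw \<mu> n \<ge> 0" by (simp add: pw_def)

lemma pw_geo_sums: "(\<lambda>n. pw \<mu> n * r ^ n) sums (exp (- \<mu>) * exp (\<mu> * r))"
proof -
  have "(\<lambda>n. exp (- \<mu>) * ((\<mu> * r) ^ n /\<^sub>R fact n)) sums (exp (- \<mu>) * exp (\<mu> * r))"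
    by (rule sums_mult[OF exp_converges])
  moreover have "(\<lambda>n. exp (- \<mu>) * ((\<mu> * r) ^ n /\<^sub>R fact n)) = (\<lambda>n. pw \<mu> n * r ^ n)"
    by (auto simp: pw_def divide_inverse power_mult_distrib)
  ultimately show ?thesis by simp
qed

lemma pw_sums: "(\<lambda>n. pw \<mu> n) sums 1"
  using pw_geo_sums[of \<mu> 1] by (simp add: exp_minus field_simps)

lemma pw_summable: "\<mu> \<ge> 0 \<Longrightarrow> (\<And>n. \<bar>c n\<bar> \<le> B) \<Longrightarrow> summable (\<lambda>n. pw \<mu> n * c n)"
proof -
  assume m: "\<mu> \<ge> 0" and c: "\<And>n. \<bar>c n\<bar> \<le> B"
  have "summable (\<lambda>n. B * pw \<mu> n)" using pw_sums sums_summable summable_mult by blast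
  then show ?thesis
  proof (rule summable_comparison_test'[where N=0])
    fix n show "norm (pw \<mu> n * c n) \<le> B * pw \<mu> n"
      using mult_left_mono[OF c[of n] pw_nonneg[OF m, of n]] pw_nonneg[OF m, of n]
      by (simp add: abs_mult mult.commute)
  qed
qed

lemma Pt_pw: "Pt P lam s v w = (\<Sum>n. pw (real CARD('n) * lam * s) n * Pn P n v (w::real^'n))"
  by (simp add: Pt_def pw_def)

context fixes P :: "real^'n \<Rightarrow> real^'n \<Rightarrow> real" assumes FK: "flip_kernel P"
begin

lemma Pn_mono_abs:
  assumes v: "v \<in> chi" and a: "a = ones \<or> a = - ones"
  shows "Pn P n v a \<le> Pn P (Suc n) v a"
proof -
  have ac: "a \<in> chi" using a by auto
  have "Pn P n v a * P a a \<le> (\<Sum>u\<in>chi. Pn P n v u * P u a)"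
    by (rule member_le_sum[where f="\<lambda>u. Pn P n v u * P u a"])
       (use v ac in \<open>auto intro!: mult_nonneg_nonneg P_nonneg[OF FK] Pn_nonneg[OF FK]\<close>)
  then show ?thesis using P_absorb[OF FK a ac] by simp
qed

lemma inc_abs: "v \<in> chi \<Longrightarrow> a = ones \<or> a = - ones \<Longrightarrow> incseq (\<lambda>n. Pn P n v a)"
  by (rule incseq_SucI) (rule Pn_mono_abs)

lemma bdd_abs: "v \<in> chi \<Longrightarrow> a \<in> chi \<Longrightarrow> bdd_above (range (\<lambda>n. Pn P n v a))"
  using Pn_le1[OF FK] by (auto intro!: bdd_aboveI[of _ 1])

lemma absorb_SUP: "v \<in> chi \<Longrightarrow> absorb_prob P v = (SUP n. Pn P n v (- ones))"
  unfolding absorb_prob_def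
  by (rule limI, rule LIMSEQ_incseq_SUP[OF bdd_abs inc_abs]) auto

lemma q_ge: "v \<in> chi \<Longrightarrow> Pn P n v (- ones) \<le> absorb_prob P v"
  by (simp add: absorb_SUP, rule cSUP_upper[OF _ bdd_abs]) auto

lemma q_le: "v \<in> chi \<Longrightarrow> absorb_prob P v \<le> 1 - Pn P n v ones"
proof -
  assume v: "v \<in> chi"
  have "Pn P m v (- ones) \<le> 1 - Pn P n v ones" for m
  proof (cases "m \<le> n")
    case True
    have "Pn P m v (- ones) \<le> Pn P n v (- ones)" using inc_abs[OF v] True by (auto simp: incseq_def)
    then show ?thesis using T_split[OF FK v, of n] T_nonneg[OF FK v, of n] by linarith
  next
    case False
    have "Pn P n v ones \<le> Pn P m v ones" using inc_abs[OF v] False by (auto simp: incseq_def)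
    then show ?thesis using T_split[OF FK v, of m] T_nonneg[OF FK v, of m] by linarith
  qed
  then show ?thesis by (simp add: absorb_SUP[OF v]) (rule cSUP_least, auto)
qed

lemma q_01: "v \<in> chi \<Longrightarrow> 0 \<le> absorb_prob P v \<and> absorb_prob P v \<le> 1"
  using q_ge[of v 0] q_le[of v 0] Pn_nonneg[OF FK, of v "- ones" 0] Pn_nonneg[OF FK, of v ones 0] by auto

lemma Pt_absorbing:
  assumes a: "a = ones \<or> a = - ones" and m: "real CARD('n) * lam * s \<ge> 0"
  shows "Pt P lam s a a = 1"
proof -
  have "Pt P lam s a a = (\<Sum>n. pw (real CARD('n) * lam * s) n)"
    unfolding Pt_pw using Pn_absorb[OF FK a] a by auto
  then show ?thesis using pw_sums sums_unique by metis
qed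

lemma rho_exists: "\<exists>\<rho>. 0 \<le> \<rho> \<and> \<rho> < 1 \<and> (\<forall>v\<in>chi. \<forall>n. T P n (v::real^'n) \<le> 2 * \<rho> ^ n)"
proof -
  obtain dl where dl: "0 < dl" "dl \<le> 1/2" "\<forall>u\<in>(Tr::(real^'n) set). dl \<le> Pn P CARD('n) u ones"
    using dl_exists[OF FK] by blast
  show ?thesis
    by (rule exI[of _ "(1 - dl) powr (1 / CARD('n))"])
       (use dl T_geo[OF FK _ dl(3) dl(1) dl(2)] in \<open>auto simp: powr01_less_one\<close>)
qed

lemma Pt_q:
  assumes v: "v \<in> chi" and m: "\<mu> \<ge> 0" and mu: "\<mu> = real CARD('n) * lam * s"
      and rho: "\<forall>v\<in>chi. \<forall>n. T P n (v::real^'n) \<le> 2 * \<rho> ^ n"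
  shows "0 \<le> absorb_prob P v - Pt P lam s v (- ones)"
        "0 \<le> (1 - absorb_prob P v) - Pt P lam s v ones"
        "(absorb_prob P v - Pt P lam s v (- ones)) + ((1 - absorb_prob P v) - Pt P lam s v ones)
            \<le> 2 * exp (- (\<mu> * (1 - \<rho>)))"
proof -
  let ?q = "absorb_prob P v"
  have sa: "(\<lambda>n. pw \<mu> n * Pn P n v a) sums Pt P lam s v a" if "a \<in> chi" for a
    unfolding Pt_pw mu[symmetric]
    by (rule summable_sums, rule pw_summable[OF m, of _ 1])
       (use Pn_nonneg[OF FK v that] Pn_le1[OF FK v that] in \<open>auto simp: abs_le_iff\<close>)
  have sq: "(\<lambda>n. pw \<mu> n * c) sums c" for c using sums_mult2[OF pw_sums[of \<mu>], of c] by simp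
  have s1: "(\<lambda>n. pw \<mu> n * (?q - Pn P n v (- ones))) sums (?q - Pt P lam s v (- ones))"
    using sums_diff[OF sq[of ?q] sa[of "- ones"]] by (simp add: algebra_simps)
  have s2: "(\<lambda>n. pw \<mu> n * ((1 - ?q) - Pn P n v ones)) sums ((1 - ?q) - Pt P lam s v ones)"
    using sums_diff[OF sq[of "1 - ?q"] sa[of ones]] by (simp add: algebra_simps)
  have n1: "0 \<le> pw \<mu> n * (?q - Pn P n v (- ones))" for n
    using q_ge[OF v, of n] pw_nonneg[OF m] by simp
  have n2: "0 \<le> pw \<mu> n * ((1 - ?q) - Pn P n v ones)" for n
    using q_le[OF v, of n] pw_nonneg[OF m] by simp
  show "0 \<le> ?q - Pt P lam s v (- ones)" using sums_le[OF _ sums_zero s1] n1 by blast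
  show "0 \<le> (1 - ?q) - Pt P lam s v ones" using sums_le[OF _ sums_zero s2] n2 by blast
  have s3: "(\<lambda>n. pw \<mu> n * T P n v) sums ((?q - Pt P lam s v (- ones)) + ((1 - ?q) - Pt P lam s v ones))"
  proof -
    have "(\<lambda>n. pw \<mu> n * (?q - Pn P n v (- ones)) + pw \<mu> n * ((1 - ?q) - Pn P n v ones))
          = (\<lambda>n. pw \<mu> n * T P n v)"
    proof
      fix n show "pw \<mu> n * (?q - Pn P n v (- ones)) + pw \<mu> n * ((1 - ?q) - Pn P n v ones) = pw \<mu> n * T P n v"
      proof -
        have eq: "T P n v = 1 - Pn P n v ones - Pn P n v (- ones)" using T_split[OF FK v, of n] by simp
        show ?thesis unfolding eq by (simp add: algebra_simps)
      qed
    qed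
    then show ?thesis using sums_add[OF s1 s2] by simp
  qed
  have s4: "(\<lambda>n. 2 * (pw \<mu> n * \<rho> ^ n)) sums (2 * (exp (- \<mu>) * exp (\<mu> * \<rho>)))"
    by (rule sums_mult[OF pw_geo_sums])
  have "(?q - Pt P lam s v (- ones)) + ((1 - ?q) - Pt P lam s v ones) \<le> 2 * (exp (- \<mu>) * exp (\<mu> * \<rho>))"
  proof (rule sums_le[OF _ s3 s4])
    fix n
    have "pw \<mu> n * T P n v \<le> pw \<mu> n * (2 * \<rho> ^ n)"
      using rho v pw_nonneg[OF m, of n] by (intro mult_left_mono) auto
    then show "pw \<mu> n * T P n v \<le> 2 * (pw \<mu> n * \<rho> ^ n)" by (simp add: algebra_simps)
  qed
  also have "exp (- \<mu>) * exp (\<mu> * \<rho>) = exp (- (\<mu> * (1 - \<rho>)))" by (simp add: exp_add[symmetric] algebra_simps)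
  finally show "(?q - Pt P lam s v (- ones)) + ((1 - ?q) - Pt P lam s v ones) \<le> 2 * exp (- (\<mu> * (1 - \<rho>)))" .
qed

end


lemma bdd_abs_range: "bounded (range (g :: 'a \<Rightarrow> real)) \<Longrightarrow> bdd_above (range (\<lambda>x. \<bar>g x\<bar>))"
  unfolding bounded_iff bdd_above_def by (auto simp: real_norm_def)

lemma abs_le_SUP: "bounded (range (g :: 'a \<Rightarrow> real)) \<Longrightarrow> \<bar>g x\<bar> \<le> (SUP y. \<bar>g y\<bar>)"
  by (rule cSUP_upper[OF _ bdd_abs_range]) auto

lemma SUP_abs_nonneg: "bounded (range (g :: 'a \<Rightarrow> real)) \<Longrightarrow> 0 \<le> (SUP y. \<bar>g y\<bar>)"
  using abs_le_SUP[of g undefined] by linarith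

lemma C1b_lip:
  fixes f :: "real^'n \<Rightarrow> real"
  assumes "C1b f f'"
  shows "\<bar>f a - f b\<bar> \<le> (\<Sum>i\<in>UNIV. SUP x. \<bar>f' x (axis i 1)\<bar>) * norm (a - b)"
proof -
  let ?B = "\<Sum>i\<in>UNIV. SUP x. \<bar>f' x (axis i 1)\<bar>"
  have der: "\<And>x. (f has_derivative f' x) (at x)" using assms by (simp add: C1b_def)
  have bnd: "\<And>i. bounded (range (\<lambda>x. f' x (axis i 1)))" using assms by (simp add: C1b_def)
  have on: "onorm (f' x) \<le> ?B" for x
  proof (rule onorm_le)
    fix h :: "real^'n"
    have lin: "linear (f' x)" using der[of x] has_derivative_linear by blast
    have "f' x h = f' x (\<Sum>i\<in>UNIV. h $ i *\<^sub>R axis i 1)"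
      using basis_expansion[of h] by (simp add: scalar_mult_eq_scaleR)
    also have "\<dots> = (\<Sum>i\<in>UNIV. h $ i * f' x (axis i 1))"
      using lin by (simp add: linear_sum linear_scale)
    finally have "\<bar>f' x h\<bar> \<le> (\<Sum>i\<in>UNIV. \<bar>h $ i\<bar> * \<bar>f' x (axis i 1)\<bar>)"
      by (metis (no_types, lifting) abs_mult sum.cong sum_abs)
    also have "\<dots> \<le> (\<Sum>i\<in>UNIV. norm h * (SUP x. \<bar>f' x (axis i 1)\<bar>))"
      by (intro sum_mono mult_mono component_le_norm_cart abs_le_SUP bnd) auto
    also have "\<dots> = ?B * norm h" by (simp add: sum_distrib_left mult.commute)
    finally show "norm (f' x h) \<le> ?B * norm h" by simp
  qed
  have "norm (f a - f b) \<le> ?B * norm (a - b)"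
    by (rule differentiable_bound[of UNIV]) (use der on in auto)
  then show ?thesis by simp
qed

lemma C1norm_ge:
  fixes f :: "real^'n \<Rightarrow> real"
  assumes "C1b f f'"
  shows "(SUP x. \<bar>f x\<bar>) \<le> C1norm f f'" "(\<Sum>i\<in>UNIV. SUP x. \<bar>f' x (axis i 1)\<bar>) \<le> C1norm f f'"
    "0 \<le> (SUP x. \<bar>f x\<bar>)" "0 \<le> (\<Sum>i\<in>UNIV. SUP x. \<bar>f' x (axis i 1)\<bar>)"
proof -
  have b: "bounded (range f)" "\<And>i. bounded (range (\<lambda>x. f' x (axis i 1)))" using assms by (auto simp: C1b_def)
  show "0 \<le> (SUP x. \<bar>f x\<bar>)" using SUP_abs_nonneg[OF b(1)] .
  show "0 \<le> (\<Sum>i\<in>UNIV. SUP x. \<bar>f' x (axis i 1)\<bar>)" using SUP_abs_nonneg[OF b(2)] by (simp add: sum_nonneg)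
  then show "(SUP x. \<bar>f x\<bar>) \<le> C1norm f f'" by (simp add: C1norm_def)
  show "(\<Sum>i\<in>UNIV. SUP x. \<bar>f' x (axis i 1)\<bar>) \<le> C1norm f f'"
    using SUP_abs_nonneg[OF b(1)] by (simp add: C1norm_def)
qed


lemma norm_chi: "(v::real^'n) \<in> chi \<Longrightarrow> norm v \<le> real CARD('n)"
proof -
  assume v: "v \<in> chi"
  have "norm v \<le> (\<Sum>i\<in>UNIV. \<bar>v $ i\<bar>)" by (rule norm_le_l1_cart)
  also have "\<dots> = (\<Sum>i\<in>(UNIV::'n set). 1)" using v unfolding chi_def by (intro sum.cong) (auto, metis abs_neg_one abs_one)
  finally show ?thesis by simp
qed

definition clampt :: "real \<Rightarrow> real \<Rightarrow> real" where "clampt t s = max 0 (min t s)"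

definition gridk :: "real \<Rightarrow> nat \<Rightarrow> real \<Rightarrow> nat" where
  "gridk t m s = nat \<lceil>real m * clampt t s / t\<rceil>"

lemma gridk_props:
  assumes t: "t > 0" and m: "m > 0"
  shows "gridk t m s \<le> m" "clampt t s \<le> t * real (gridk t m s) / real m"
        "t * real (gridk t m s) / real m \<le> clampt t s + t / real m"
        "\<lceil>real m * clampt t s / t\<rceil> = int (gridk t m s)"
proof -
  let ?y = "real m * clampt t s / t"
  have c: "0 \<le> clampt t s" "clampt t s \<le> t" using t by (auto simp: clampt_def)
  have y0: "0 \<le> ?y" using c t by simp
  have "real m * clampt t s \<le> real m * t" using c by (intro mult_left_mono) auto
  then have ym: "?y \<le> real m" using t by (simp add: field_simps)
  have ce: "\<lceil>?y\<rceil> \<ge> 0" using y0 by simp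
  show "\<lceil>?y\<rceil> = int (gridk t m s)" using ce by (simp add: gridk_def)
  have "\<lceil>?y\<rceil> \<le> int m" using ym by (simp add: ceiling_le_iff)
  then show "gridk t m s \<le> m" using ym by (simp add: gridk_def)
  have g: "real (gridk t m s) = of_int \<lceil>?y\<rceil>" using ce by (simp add: gridk_def)
  have "?y \<le> of_int \<lceil>?y\<rceil>" by (rule le_of_int_ceiling)
  then have "?y \<le> real (gridk t m s)" using g by simp
  then show "clampt t s \<le> t * real (gridk t m s) / real m" using t m by (simp add: field_simps)
  have "of_int \<lceil>?y\<rceil> \<le> ?y + 1" by (rule of_int_ceiling_le_add_one)
  then have "real (gridk t m s) \<le> ?y + 1" using g by simp
  then show "t * real (gridk t m s) / real m \<le> clampt t s + t / real m" using t m by (simp add: field_simps)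
qed


lemma rc_seq:
  fixes g :: "real \<Rightarrow> 'b::metric_space"
  assumes c: "continuous (at_right u) g" and xu: "\<And>i. u \<le> x i" and x: "x \<longlonglongrightarrow> u"
  shows "(\<lambda>i. g (x i)) \<longlonglongrightarrow> g u"
proof (rule tendstoI)
  fix e :: real assume e: "e > 0"
  have "(g \<longlongrightarrow> g u) (at_right u)" using c by (simp add: continuous_within)
  then have "eventually (\<lambda>y. dist (g y) (g u) < e) (at_right u)" using e tendstoD by blast
  then obtain b where b: "b > u" "\<And>y. u < y \<Longrightarrow> y < b \<Longrightarrow> dist (g y) (g u) < e"
    by (auto simp: eventually_at_right_field)
  have "eventually (\<lambda>i. x i < b) sequentially" using x b(1) order_tendstoD(2) by blast
  then show "eventually (\<lambda>i. dist (g (x i)) (g u) < e) sequentially"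
  proof (rule eventually_mono)
    fix i assume "x i < b"
    then show "dist (g (x i)) (g u) < e" using b(2)[of "x i"] xu[of i] e
      by (cases "x i = u") auto
  qed
qed

context
  fixes V :: "real \<Rightarrow> 'a \<Rightarrow> real^'n" and M :: "'a measure" and t :: real
  assumes meas: "\<And>s. s \<ge> 0 \<Longrightarrow> V s \<in> measurable M (count_space UNIV)"
    and chiV: "\<And>\<omega> s. \<omega> \<in> space M \<Longrightarrow> s \<ge> 0 \<Longrightarrow> V s \<omega> \<in> chi"
    and rc: "\<And>\<omega> s. \<omega> \<in> space M \<Longrightarrow> s \<ge> 0 \<Longrightarrow> continuous (at_right s) (\<lambda>s. V s \<omega>)"
    and t: "t > 0"
begin

lemma Vb: "s \<ge> 0 \<Longrightarrow> V s \<in> borel_measurable M"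
  using measurable_compose[OF meas, of s "\<lambda>x. x" borel] by (simp add: measurable_count_space_eq1)

lemma Wm_meas:
  assumes m: "m > 0"
  shows "(\<lambda>p. V (t * real (gridk t m (snd p)) / real m) (fst p)) \<in> borel_measurable (M \<Otimes>\<^sub>M lborel)"
proof -
  let ?A = "\<lambda>k. {s::real. \<lceil>real m * max 0 (min t s) / t\<rceil> = int k}"
  have A: "?A k \<in> sets lborel" for k by measurable
  have eq: "V (t * real (gridk t m (snd p)) / real m) (fst p) =
     (\<Sum>k\<in>{..m}. indicator (?A k) (snd p) *\<^sub>R V (t * real k / real m) (fst p))" for p
  proof -
    let ?K = "gridk t m (snd p)"
    have K: "?K \<le> m" using gridk_props[OF t m] by simp
    have ind: "indicator (?A k) (snd p) = (if k = ?K then 1 else (0::real))" for k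
      using gridk_props(4)[OF t m, of "snd p"] by (auto simp: indicator_def clampt_def)
    have "(\<Sum>k\<in>{..m}. indicator (?A k) (snd p) *\<^sub>R V (t * real k / real m) (fst p))
        = (\<Sum>k\<in>{..m}. if k = ?K then V (t * real k / real m) (fst p) else 0)"
      by (rule sum.cong) (auto simp: ind)
    also have "\<dots> = V (t * real ?K / real m) (fst p)" using K by (simp add: sum.delta)
    finally show ?thesis by simp
  qed
  have "(\<lambda>p. \<Sum>k\<in>{..m}. indicator (?A k) (snd p) *\<^sub>R V (t * real k / real m) (fst p)) \<in> borel_measurable (M \<Otimes>\<^sub>M lborel)"
  proof (intro borel_measurable_sum borel_measurable_scaleR)
    fix k
    show "(\<lambda>p. indicator (?A k) (snd p)) \<in> borel_measurable (M \<Otimes>\<^sub>M lborel)"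
      using A by (intro measurable_compose[OF measurable_snd]) auto
    show "(\<lambda>p. V (t * real k / real m) (fst p)) \<in> borel_measurable (M \<Otimes>\<^sub>M lborel)"
      using t by (intro measurable_compose[OF measurable_fst] Vb) auto
  qed
  then show ?thesis by (simp add: eq)
qed

lemma W_lim:
  assumes w: "\<omega> \<in> space M"
  shows "(\<lambda>i. V (t * real (gridk t (Suc i) s) / real (Suc i)) \<omega>) \<longlonglongrightarrow> V (clampt t s) \<omega>"
proof (rule rc_seq)
  show "continuous (at_right (clampt t s)) (\<lambda>s. V s \<omega>)" using rc[OF w] by (simp add: clampt_def)
  show "clampt t s \<le> t * real (gridk t (Suc i) s) / real (Suc i)" for i
    using gridk_props(2)[OF t, of "Suc i"] by simp
  have u: "(\<lambda>i. clampt t s + t / real (Suc i)) \<longlonglongrightarrow> clampt t s"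
    using tendsto_add[OF tendsto_const LIMSEQ_Suc[OF lim_const_over_n[of t]]] by simp
  show "(\<lambda>i. t * real (gridk t (Suc i) s) / real (Suc i)) \<longlonglongrightarrow> clampt t s"
  proof (rule tendsto_sandwich[OF _ _ tendsto_const u])
    show "eventually (\<lambda>i. clampt t s \<le> t * real (gridk t (Suc i) s) / real (Suc i)) sequentially"
      by (intro always_eventually allI gridk_props(2)[OF t]) simp
    show "eventually (\<lambda>i. t * real (gridk t (Suc i) s) / real (Suc i) \<le> clampt t s + t / real (Suc i)) sequentially"
      by (intro always_eventually allI gridk_props(3)[OF t]) simp
  qed
qed

lemma W_meas: "(\<lambda>p. V (clampt t (snd p)) (fst p)) \<in> borel_measurable (M \<Otimes>\<^sub>M lborel)"
  by (rule borel_measurable_LIMSEQ_metric[OF Wm_meas W_lim]) (auto simp: space_pair_measure)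

lemma W_bound: "\<omega> \<in> space M \<Longrightarrow> norm (V (clampt t s) \<omega>) \<le> real CARD('n)"
  by (rule norm_chi, rule chiV) (auto simp: clampt_def)

lemma W_sec: "\<omega> \<in> space M \<Longrightarrow> (\<lambda>s. V (clampt t s) \<omega>) \<in> borel_measurable lborel"
  using measurable_Pair2[OF W_meas] by simp

lemma W_setint: "\<omega> \<in> space M \<Longrightarrow> set_integrable lborel {0..t} (\<lambda>s. V (clampt t s) \<omega>)"
  unfolding set_integrable_def
proof (rule integrableI_bounded_set_indicator[where B="real CARD('n)"])
  assume w: "\<omega> \<in> space M"
  show "(\<lambda>s. V (clampt t s) \<omega>) \<in> borel_measurable lborel" using W_sec[OF w] .
  show "emeasure lborel {0..t} < \<infinity>" using t by simp
qed (auto simp: W_bound)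

lemma path_int:
  assumes w: "\<omega> \<in> space M"
  shows "(\<lambda>s. V s \<omega>) integrable_on {0..t}"
    "integral {0..t} (\<lambda>s. V s \<omega>) = (LINT s:{0..t}|lborel. V (clampt t s) \<omega>)"
proof -
  have cong: "\<And>s. s \<in> {0..t} \<Longrightarrow> V (clampt t s) \<omega> = V s \<omega>" by (auto simp: clampt_def)
  show "(\<lambda>s. V s \<omega>) integrable_on {0..t}"
    using set_borel_integral_eq_integral(1)[OF W_setint[OF w]] integrable_cong[of "{0..t}", OF cong] by simp
  show "integral {0..t} (\<lambda>s. V s \<omega>) = (LINT s:{0..t}|lborel. V (clampt t s) \<omega>)"
    using set_borel_integral_eq_integral(2)[OF W_setint[OF w]] integral_cong[of "{0..t}", OF cong] by simp
qed

lemma int_meas: "(\<lambda>\<omega>. integral {0..t} (\<lambda>s. V s \<omega>)) \<in> borel_measurable M"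
proof -
  have "(\<lambda>\<omega>. LINT s:{0..t}|lborel. V (clampt t s) \<omega>) \<in> borel_measurable M"
    unfolding set_lebesgue_integral_def
  proof (rule lborel.borel_measurable_lebesgue_integral)
    have "(\<lambda>p. indicator {0..t} (snd p) *\<^sub>R V (clampt t (snd p)) (fst p)) \<in> borel_measurable (M \<Otimes>\<^sub>M lborel)"
      by (intro borel_measurable_scaleR W_meas measurable_compose[OF measurable_snd]) auto
    then show "(\<lambda>(x, y). indicat_real {0..t} y *\<^sub>R V (clampt t y) x) \<in> borel_measurable (M \<Otimes>\<^sub>M lborel)"
      by (simp add: case_prod_beta)
  qed
  then show ?thesis by (rule measurable_cong[THEN iffD1, rotated]) (simp add: path_int)
qed

end


context
  fixes P :: "real^'n \<Rightarrow> real^'n \<Rightarrow> real" and lam :: real and v :: "real^'n"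
    and M :: "'a measure" and V :: "real \<Rightarrow> 'a \<Rightarrow> real^'n"
  assumes FK: "flip_kernel P" and FP: "fast_process P lam v M V" and v: "v \<in> chi" and lam: "lam > 0"
begin

lemma ps: "prob_space M" using FP by (simp add: fast_process_def)

lemma measV: "s \<ge> 0 \<Longrightarrow> V s \<in> measurable M (count_space UNIV)" using FP by (simp add: fast_process_def)

lemma chiV: "\<omega> \<in> space M \<Longrightarrow> s \<ge> 0 \<Longrightarrow> V s \<omega> \<in> chi" using FP by (simp add: fast_process_def)

lemma rcV: "\<omega> \<in> space M \<Longrightarrow> s \<ge> 0 \<Longrightarrow> continuous (at_right s) (\<lambda>s. V s \<omega>)"
  using FP by (simp add: fast_process_def cadlag_def)

lemma fdd: "0 \<le> ts 0 \<Longrightarrow> (\<forall>i<n. ts i < ts (Suc i)) \<Longrightarrow> (\<forall>i\<le>n. ws i \<in> chi) \<Longrightarrow>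
        measure M {\<omega>\<in>space M. \<forall>i\<le>n. V (ts i) \<omega> = ws i} =
          (\<Prod>i\<le>n. Pt P lam (ts i - (if i = 0 then 0 else ts (i - 1)))
                              (if i = 0 then v else ws (i - 1)) (ws i))"
  using FP unfolding fast_process_def by blast

lemma E_sets: "r \<ge> 0 \<Longrightarrow> {\<omega>\<in>space M. V r \<omega> = w} \<in> sets M"
proof -
  assume r: "r \<ge> 0"
  have "V r -` {w} \<inter> space M \<in> sets M" by (rule measurable_sets[OF measV[OF r]]) simp
  moreover have "V r -` {w} \<inter> space M = {\<omega>\<in>space M. V r \<omega> = w}" by auto
  ultimately show ?thesis by simp
qed

lemma E_meas: "r \<ge> 0 \<Longrightarrow> w \<in> chi \<Longrightarrow> measure M {\<omega>\<in>space M. V r \<omega> = w} = Pt P lam r v w"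
proof -
  assume r: "r \<ge> 0" and w: "w \<in> chi"
  have "measure M {\<omega>\<in>space M. \<forall>i\<le>(0::nat). V ((\<lambda>_. r) i) \<omega> = (\<lambda>_. w) i} =
     (\<Prod>i\<le>(0::nat). Pt P lam ((\<lambda>_. r) i - (if i = 0 then 0 else (\<lambda>_. r) (i - 1)))
                              (if i = 0 then v else (\<lambda>_. w) (i - 1)) ((\<lambda>_. w) i))"
    by (rule fdd) (use r w in auto)
  then show ?thesis by simp
qed

lemma E2_meas:
  assumes s0: "0 \<le> s0" "s0 < r" and a: "a = ones \<or> a = - ones"
  shows "measure M {\<omega>\<in>space M. V s0 \<omega> = a \<and> V r \<omega> = a} = Pt P lam s0 v a"
proof -
  let ?ts = "\<lambda>i::nat. if i = 0 then s0 else r"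
  have ac: "a \<in> chi" using a by auto
  have "measure M {\<omega>\<in>space M. \<forall>i\<le>(1::nat). V (?ts i) \<omega> = (\<lambda>_. a) i} =
     (\<Prod>i\<le>(1::nat). Pt P lam (?ts i - (if i = 0 then 0 else ?ts (i - 1)))
                              (if i = 0 then v else (\<lambda>_. a) (i - 1)) ((\<lambda>_. a) i))"
    by (rule fdd) (use s0 ac in auto)
  moreover have "{..(1::nat)} = {0, 1}" by auto
  moreover have "{\<omega>\<in>space M. \<forall>i\<le>(1::nat). V (?ts i) \<omega> = a} = {\<omega>\<in>space M. V s0 \<omega> = a \<and> V r \<omega> = a}"
    by (auto simp: le_Suc_eq)
  moreover have "Pt P lam (r - s0) a a = 1"
    using s0 lam by (intro Pt_absorbing[OF FK a]) auto
  ultimately show ?thesis by simp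
qed

definition Gs :: "real \<Rightarrow> real^'n \<Rightarrow> 'a set" where
  "Gs s0 a = (\<Inter>r\<in>insert s0 (\<rat> \<inter> {s0<..}). {\<omega>\<in>space M. V r \<omega> = a})"

lemma cntX: "countable (insert s0 (\<rat> \<inter> {s0<..}))"
  using countable_rat by (auto intro: countable_subset)

lemma G_sets: "s0 \<ge> 0 \<Longrightarrow> Gs s0 a \<in> sets M"
  unfolding Gs_def by (rule sets.countable_INT'[OF cntX]) (auto intro!: E_sets)

lemma G_sub: "Gs s0 a \<subseteq> {\<omega>\<in>space M. V s0 \<omega> = a}"
  unfolding Gs_def by auto

lemma G_meas:
  assumes s0: "0 \<le> s0" and a: "a = ones \<or> a = - ones"
  shows "measure M (Gs s0 a) = Pt P lam s0 v a"
proof -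
  interpret prob_space M by (rule ps)
  have ac: "a \<in> chi" using a by auto
  let ?E = "\<lambda>r. {\<omega>\<in>space M. V r \<omega> = a}"
  have ae1: "AE \<omega> in M. V s0 \<omega> = a \<longrightarrow> V r \<omega> = a" if r: "r \<in> \<rat> \<inter> {s0<..}" for r
  proof -
    have r0: "s0 < r" "0 \<le> r" using r s0 by auto
    have "?E s0 \<inter> ?E r = {\<omega>\<in>space M. V s0 \<omega> = a \<and> V r \<omega> = a}" by auto
    then have "measure M (?E s0 - ?E r) = 0"
      using finite_measure_Diff'[OF E_sets[OF s0] E_sets[OF r0(2)]] E_meas[OF s0 ac] E2_meas[OF s0 r0(1) a]
      by simp
    then have "?E s0 - ?E r \<in> null_sets M"
      using E_sets[OF s0] E_sets[OF r0(2)] by (intro null_setsI) (auto simp: emeasure_eq_measure)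
    note N = this
    from AE_not_in[OF N] AE_space show ?thesis by eventually_elim auto
  qed
  have "AE \<omega> in M. \<forall>r\<in>\<rat> \<inter> {s0<..}. V s0 \<omega> = a \<longrightarrow> V r \<omega> = a"
    by (rule AE_ball_countable'[OF ae1]) (use cntX in \<open>auto intro: countable_subset\<close>)
  then have "AE \<omega> in M. (\<omega> \<in> Gs s0 a) = (\<omega> \<in> ?E s0)"
    by eventually_elim (auto simp: Gs_def)
  then have "measure M (Gs s0 a) = measure M (?E s0)"
    by (rule measure_eq_AE) (use G_sets[OF s0] E_sets[OF s0] in auto)
  then show ?thesis using E_meas[OF s0 ac] by simp
qed

lemma G_path:
  assumes w: "\<omega> \<in> Gs s0 a" and s0: "0 \<le> s0" and s: "s0 \<le> s"
  shows "V s \<omega> = a"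
proof (cases "s = s0")
  case True then show ?thesis using w by (auto simp: Gs_def)
next
  case False
  then have ss: "s0 < s" using s by simp
  have ws: "\<omega> \<in> space M" using w G_sub by blast
  show ?thesis
  proof (rule ccontr)
    assume ne: "V s \<omega> \<noteq> a"
    let ?e = "dist (V s \<omega>) a"
    have e: "?e > 0" using ne by simp
    have "((\<lambda>s. V s \<omega>) \<longlongrightarrow> V s \<omega>) (at_right s)" using rcV[OF ws, of s] s s0 by (simp add: continuous_within)
    then have "eventually (\<lambda>y. dist (V y \<omega>) (V s \<omega>) < ?e) (at_right s)" using e tendstoD by blast
    then obtain b where b: "b > s" "\<And>y. s < y \<Longrightarrow> y < b \<Longrightarrow> dist (V y \<omega>) (V s \<omega>) < ?e"
      by (auto simp: eventually_at_right_field)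
    obtain y where y: "y \<in> \<rat>" "s < y" "y < b" using Rats_dense_in_real[OF b(1)] by blast
    have "V y \<omega> = a" using w y ss by (auto simp: Gs_def)
    then show False using b(2)[OF y(2,3)] by (simp add: dist_commute)
  qed
qed

lemma path_bound:
  assumes t: "t > 0" and s0: "0 \<le> s0" "s0 \<le> t" and a: "a = ones \<or> a = - ones" and w: "\<omega> \<in> Gs s0 a"
  shows "norm (slow_process V x t \<omega> - (x + t *\<^sub>R a)) \<le> 2 * real CARD('n) * s0"
proof -
  have ws: "\<omega> \<in> space M" using w G_sub by blast
  have ac: "a \<in> chi" using a by auto
  have I: "(\<lambda>s. V s \<omega>) integrable_on {0..t}"
    by (rule path_int(1)[of V M t]) (use measV chiV rcV t ws in auto)
  let ?h = "\<lambda>s. V s \<omega> - a"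
  have Ic: "(\<lambda>s. a) integrable_on {0..t}" using has_integral_const_real by blast
  have Ih: "?h integrable_on {0..t}" using integrable_diff[OF I Ic] .
  have "slow_process V x t \<omega> - (x + t *\<^sub>R a) = integral {0..t} (\<lambda>s. V s \<omega>) - integral {0..t} (\<lambda>s. a)"
    using t by (simp add: slow_process_def integral_const_real)
  also have "\<dots> = integral {0..t} ?h" using integral_diff[OF I Ic] by simp
  also have "\<dots> = integral {0..s0} ?h + integral {s0..t} ?h" using Henstock_Kurzweil_Integration.integral_combine[OF s0 Ih] by simp
  also have "integral {s0..t} ?h = integral {s0..t} (\<lambda>s. 0)"
    by (rule integral_cong) (use G_path[OF w s0(1)] in auto)
  finally have eq: "slow_process V x t \<omega> - (x + t *\<^sub>R a) = integral {0..s0} ?h" by simp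
  have Ih0: "(?h has_integral integral {0..s0} ?h) {0..s0}"
    using integrable_subinterval_real[OF Ih, of 0 s0] s0 by (auto intro: integrable_integral)
  have "norm (integral {0..s0} ?h) \<le> (2 * real CARD('n)) * Henstock_Kurzweil_Integration.content {0..s0}"
  proof (rule has_integral_bound_real[OF _ _ Ih0, where S="{}"])
    fix s assume s: "s \<in> {0..s0} - {}"
    have "norm (?h s) \<le> norm (V s \<omega>) + norm a" by (rule norm_triangle_ineq4)
    also have "\<dots> \<le> real CARD('n) + real CARD('n)"
      using norm_chi[OF chiV[OF ws, of s]] norm_chi[OF ac] s by auto
    finally show "norm (?h s) \<le> 2 * real CARD('n)" by simp
  qed auto
  then show ?thesis using eq s0 by simp
qed

lemma core:
  fixes f :: "real^'n \<Rightarrow> real" and x :: "real^'n"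
  assumes t: "t > 0" and s0: "0 \<le> s0" "s0 \<le> t" and C: "C1b f f'"
  shows "\<bar>integral\<^sup>L M (\<lambda>\<omega>. f (slow_process V x t \<omega>))
             - (absorb_prob P v * f (x - t *\<^sub>R ones) + (1 - absorb_prob P v) * f (x + t *\<^sub>R ones))\<bar>
    \<le> (\<Sum>i\<in>UNIV. SUP x. \<bar>f' x (axis i 1)\<bar>) * (2 * real CARD('n) * s0)
       + (SUP x. \<bar>f x\<bar>) * ((absorb_prob P v - Pt P lam s0 v (- ones)) + ((1 - absorb_prob P v) - Pt P lam s0 v ones))
       + (SUP x. \<bar>f x\<bar>) * (\<bar>absorb_prob P v - Pt P lam s0 v (- ones)\<bar> + \<bar>(1 - absorb_prob P v) - Pt P lam s0 v ones\<bar>)"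
proof -
  interpret prob_space M by (rule ps)
  let ?S = "SUP x. \<bar>f x\<bar>"
  let ?B = "\<Sum>i\<in>UNIV. SUP x. \<bar>f' x (axis i 1)\<bar>"
  let ?q = "absorb_prob P v"
  let ?D1 = "?q - Pt P lam s0 v (- ones)"
  let ?D2 = "(1 - ?q) - Pt P lam s0 v ones"
  let ?L = "?B * (2 * real CARD('n) * s0)"
  define g where "g = (\<lambda>\<omega>. f (slow_process V x t \<omega>))"
  define fb where "fb = f (x + t *\<^sub>R ones)"
  define fa where "fa = f (x - t *\<^sub>R ones)"
  define Gp where "Gp = Gs s0 ones"
  define Gn where "Gn = Gs s0 (- ones)"
  define R where "R = space M - Gp - Gn"
  have bf: "bounded (range f)" and cf: "continuous_on UNIV f" using C by (auto simp: C1b_def)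
  have S0: "0 \<le> ?S" and B0: "0 \<le> ?B" using C1norm_ge[OF C] by auto
  have L0: "0 \<le> ?L" using B0 s0 by simp
  have sm: "(\<lambda>\<omega>. slow_process V x t \<omega>) \<in> borel_measurable M"
    unfolding slow_process_def
    by (intro borel_measurable_add borel_measurable_const int_meas[of V M t]) (use measV chiV rcV t in auto)
  have gm: "g \<in> borel_measurable M"
    unfolding g_def by (rule measurable_compose[OF sm borel_measurable_continuous_onI[OF cf]])
  have gb: "\<bar>g \<omega>\<bar> \<le> ?S" for \<omega> unfolding g_def by (rule abs_le_SUP[OF bf])
  have gi: "integrable M g" by (rule integrable_const_bound[where B="?S"]) (use gb gm in auto)
  have Gps: "Gp \<in> sets M" and Gns: "Gn \<in> sets M" using G_sets s0 by (auto simp: Gp_def Gn_def)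
  have disj: "Gp \<inter> Gn = {}"
  proof -
    have "Gp \<inter> Gn \<subseteq> {\<omega>. V s0 \<omega> = ones \<and> V s0 \<omega> = - ones}"
      using G_sub unfolding Gp_def Gn_def by blast
    then show ?thesis by auto
  qed
  have Rs: "R \<in> sets M" using Gps Gns by (auto simp: R_def)
  have mG: "measure M Gp = Pt P lam s0 v ones" "measure M Gn = Pt P lam s0 v (- ones)"
    using G_meas s0 by (auto simp: Gp_def Gn_def)
  have mR: "measure M R = 1 - measure M Gp - measure M Gn"
  proof -
    have "R = space M - (Gp \<union> Gn)" by (auto simp: R_def)
    then have "measure M R = 1 - measure M (Gp \<union> Gn)" using prob_compl Gps Gns by auto
    then show ?thesis using finite_measure_Union[OF Gps Gns disj] by simp
  qed
  define h where "h = (\<lambda>\<omega>. indicator Gp \<omega> * fb + indicator Gn \<omega> * fa)"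
  have hi: "integrable M h" unfolding h_def
    using Gps Gns by (intro Bochner_Integration.integrable_add Bochner_Integration.integrable_mult_left integrable_real_indicator) (auto simp: emeasure_eq_measure)
  have Gpsub: "Gp \<subseteq> space M" and Gnsub: "Gn \<subseteq> space M" using Gps Gns sets.sets_into_space by auto
  have hint: "integral\<^sup>L M h = measure M Gp * fb + measure M Gn * fa"
  proof -
    have "integral\<^sup>L M h = integral\<^sup>L M (\<lambda>\<omega>. indicator Gp \<omega> * fb) + integral\<^sup>L M (\<lambda>\<omega>. indicator Gn \<omega> * fa)"
      unfolding h_def using Gps Gns by (intro Bochner_Integration.integral_add Bochner_Integration.integrable_mult_left integrable_real_indicator) (auto simp: emeasure_eq_measure)
    also have "\<dots> = measure M Gp * fb + measure M Gn * fa"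
      using Gpsub Gnsub by (simp add: Int_absorb2)
    finally show ?thesis .
  qed
  have pw_b: "\<bar>g \<omega> - h \<omega>\<bar> \<le> ?L + ?S * indicator R \<omega>" if w: "\<omega> \<in> space M" for \<omega>
  proof (cases "\<omega> \<in> Gp")
    case True
    then have "\<omega> \<notin> Gn" using disj by auto
    then have hw: "h \<omega> = fb" "indicator R \<omega> = (0::real)" using True by (auto simp: h_def R_def)
    have "\<bar>g \<omega> - fb\<bar> \<le> ?B * norm (slow_process V x t \<omega> - (x + t *\<^sub>R ones))"
      unfolding g_def fb_def by (rule C1b_lip[OF C])
    also have "\<dots> \<le> ?L"
      using path_bound[OF t s0, of ones \<omega> x] True B0 by (auto simp: Gp_def intro: mult_left_mono)
    finally show ?thesis using hw by simp
  next
    case False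
    show ?thesis
    proof (cases "\<omega> \<in> Gn")
      case True
      then have hw: "h \<omega> = fa" "indicator R \<omega> = (0::real)" using False by (auto simp: h_def R_def)
      have e: "x - t *\<^sub>R ones = x + t *\<^sub>R (- ones)" by simp
      have "\<bar>g \<omega> - fa\<bar> \<le> ?B * norm (slow_process V x t \<omega> - (x + t *\<^sub>R (- ones)))"
        unfolding g_def fa_def e by (rule C1b_lip[OF C])
      also have "\<dots> \<le> ?L"
        using path_bound[OF t s0, of "- ones" \<omega> x] True B0 by (auto simp: Gn_def intro: mult_left_mono)
      finally show ?thesis using hw by simp
    next
      case F2: False
      then have hw: "h \<omega> = 0" "indicator R \<omega> = (1::real)" using False w by (auto simp: h_def R_def)
      show ?thesis unfolding hw by (simp only: diff_zero mult_1_right) (use gb[of \<omega>] L0 in linarith)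
    qed
  qed
  have rhsi: "integrable M (\<lambda>\<omega>. ?L + ?S * indicator R \<omega>)"
    using Rs by (intro Bochner_Integration.integrable_add Bochner_Integration.integrable_mult_right integrable_real_indicator) (auto simp: emeasure_eq_measure)
  have gh: "integrable M (\<lambda>\<omega>. \<bar>g \<omega> - h \<omega>\<bar>)"
    using Bochner_Integration.integrable_diff[OF gi hi] by (rule integrable_abs)
  have "\<bar>integral\<^sup>L M (\<lambda>\<omega>. g \<omega> - h \<omega>)\<bar> \<le> integral\<^sup>L M (\<lambda>\<omega>. \<bar>g \<omega> - h \<omega>\<bar>)"
    by (rule integral_abs_bound)
  also have "\<dots> \<le> integral\<^sup>L M (\<lambda>\<omega>. ?L + ?S * indicator R \<omega>)"
    using gh rhsi pw_b by (rule Bochner_Integration.integral_mono)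
  also have "\<dots> = ?L + ?S * measure M R"
    using Rs sets.sets_into_space[OF Rs] rhsi integrable_real_indicator[OF Rs] emeasure_eq_measure[of R]
    by (subst Bochner_Integration.integral_add) (auto simp: Int_absorb2 prob_space)
  finally have b1: "\<bar>integral\<^sup>L M g - integral\<^sup>L M h\<bar> \<le> ?L + ?S * measure M R"
    using Bochner_Integration.integral_diff[OF gi hi] by simp
  have mR': "measure M R = ?D1 + ?D2" using mR mG by simp
  have "integral\<^sup>L M h - (?q * fa + (1 - ?q) * fb) = - (?D2 * fb) - ?D1 * fa"
    using hint mG by (simp add: algebra_simps)
  then have b2: "\<bar>integral\<^sup>L M h - (?q * fa + (1 - ?q) * fb)\<bar> \<le> ?S * (\<bar>?D1\<bar> + \<bar>?D2\<bar>)"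
  proof -
    assume eq: "integral\<^sup>L M h - (?q * fa + (1 - ?q) * fb) = - (?D2 * fb) - ?D1 * fa"
    have "\<bar>?D2 * fb\<bar> \<le> \<bar>?D2\<bar> * ?S" unfolding abs_mult fb_def
      by (intro mult_left_mono abs_le_SUP[OF bf]) auto
    moreover have "\<bar>?D1 * fa\<bar> \<le> \<bar>?D1\<bar> * ?S" unfolding abs_mult fa_def
      by (intro mult_left_mono abs_le_SUP[OF bf]) auto
    ultimately show ?thesis unfolding eq by (simp add: algebra_simps)
  qed
  from b1 b2 mR' show ?thesis unfolding g_def[symmetric] fa_def[symmetric] fb_def[symmetric]
    by (simp add: algebra_simps)
qed

end


lemma int_bound_prob:
  assumes "prob_space M" and b: "\<And>x. \<bar>g x\<bar> \<le> (S::real)"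
  shows "\<bar>integral\<^sup>L M g\<bar> \<le> S"
proof (cases "integrable M g")
  case True
  interpret prob_space M by fact
  have "\<bar>integral\<^sup>L M g\<bar> \<le> integral\<^sup>L M (\<lambda>x. \<bar>g x\<bar>)" by (rule integral_abs_bound)
  also have "\<dots> \<le> integral\<^sup>L M (\<lambda>x. S)"
    by (rule Bochner_Integration.integral_mono) (use True b in auto)
  also have "\<dots> = S" by (simp add: prob_space)
  finally show ?thesis .
next
  case False
  then show ?thesis using b[of undefined] by (simp add: not_integrable_integral_eq)
qed

lemma arith1: "(b::real) * (K * z) + s * (K * z) = K * (s + b) * z"
  by (simp add: algebra_simps)

lemma arith2: "(a::real) * z * s \<le> K * z * (s + b) \<Longrightarrow> K * z * (s + b) = K * (s + b) * z"
  by (simp add: algebra_simps)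

theorem mainTheorem1:
  fixes P :: "real^'n \<Rightarrow> real^'n \<Rightarrow> real"
  assumes "flip_kernel P"
  shows "\<forall>t>0. \<exists>K>0. \<exists>c1>0. \<forall>lam>0. \<forall>x v (f :: real^'n \<Rightarrow> real) f' (M :: 'a measure) V.
           v \<in> chi \<longrightarrow> fast_process P lam v M V \<longrightarrow> C1b f f' \<longrightarrow>
           \<bar>integral\<^sup>L M (\<lambda>\<omega>. f (slow_process V x t \<omega>))
             - (absorb_prob P v * f (x - t *\<^sub>R ones) + (1 - absorb_prob P v) * f (x + t *\<^sub>R ones))\<bar>
           \<le> K * C1norm f f' * (1 / sqrt lam + exp (- c1 * sqrt lam))"
proof (intro allI impI)
  fix t :: real assume t: "t > 0"
  note FK = assms
  obtain \<rho> where rho: "0 \<le> \<rho>" "\<rho> < 1" "\<forall>v\<in>chi. \<forall>n. T P n (v::real^'n) \<le> 2 * \<rho> ^ n"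
    using rho_exists[OF FK] by blast
  define N where "N = real CARD('n)"
  have N1: "N \<ge> 1" by (simp add: N_def)
  define c1 where "c1 = N * (1 - \<rho>)"
  define K where "K = max (2 / t) (max (2 * N) 4)"
  have c1: "c1 > 0" using rho N1 by (simp add: c1_def)
  have K: "K > 0" "2 / t \<le> K" "2 * N \<le> K" "4 \<le> K" by (auto simp: K_def)
  show "\<exists>K>0. \<exists>c1>0. \<forall>lam>0. \<forall>x v (f :: real^'n \<Rightarrow> real) f' (M :: 'a measure) V.
           v \<in> chi \<longrightarrow> fast_process P lam v M V \<longrightarrow> C1b f f' \<longrightarrow>
           \<bar>integral\<^sup>L M (\<lambda>\<omega>. f (slow_process V x t \<omega>))
             - (absorb_prob P v * f (x - t *\<^sub>R ones) + (1 - absorb_prob P v) * f (x + t *\<^sub>R ones))\<bar>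
           \<le> K * C1norm f f' * (1 / sqrt lam + exp (- c1 * sqrt lam))"
  proof (rule exI[of _ K], rule conjI[OF K(1)], rule exI[of _ c1], rule conjI[OF c1], intro allI impI)
    fix lam :: real and x v and f :: "real^'n \<Rightarrow> real" and f' and M :: "'a measure" and V
    assume lam: "lam > 0" and v: "v \<in> chi" and FP: "fast_process P lam v M V" and C: "C1b f f'"
    let ?S = "SUP x. \<bar>f x\<bar>"
    let ?B = "\<Sum>i\<in>UNIV. SUP x. \<bar>f' x (axis i 1)\<bar>"
    let ?q = "absorb_prob P v"
    let ?err = "\<bar>integral\<^sup>L M (\<lambda>\<omega>. f (slow_process V x t \<omega>))
             - (?q * f (x - t *\<^sub>R ones) + (1 - ?q) * f (x + t *\<^sub>R ones))\<bar>"
    have nf: "C1norm f f' = ?S + ?B" by (simp add: C1norm_def)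
    have S0: "0 \<le> ?S" and B0: "0 \<le> ?B" using C1norm_ge[OF C] by auto
    have bf: "bounded (range f)" using C by (simp add: C1b_def)
    have sl: "sqrt lam > 0" using lam by simp
    have ex0: "exp (- c1 * sqrt lam) > 0" by simp
    show "?err \<le> K * C1norm f f' * (1 / sqrt lam + exp (- c1 * sqrt lam))"
    proof (cases "1 / sqrt lam \<le> t")
      case True
      define s0 where "s0 = 1 / sqrt lam"
      have s0: "0 \<le> s0" "s0 \<le> t" using True sl by (auto simp: s0_def)
      let ?D1 = "?q - Pt P lam s0 v (- ones)"
      let ?D2 = "(1 - ?q) - Pt P lam s0 v ones"
      have ld: "lam / sqrt lam = sqrt lam" using lam by (simp add: real_div_sqrt)
      have "N * lam * s0 = N * (lam / sqrt lam)" by (simp add: s0_def)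
      then have mu: "N * lam * s0 = N * sqrt lam" using ld by simp
      have mu0: "N * lam * s0 \<ge> 0" using lam s0 N1 by simp
      have D: "0 \<le> ?D1" "0 \<le> ?D2" "?D1 + ?D2 \<le> 2 * exp (- (N * lam * s0 * (1 - \<rho>)))"
        using Pt_q[OF FK v mu0 _ rho(3), of lam s0] by (auto simp: N_def)
      have ee: "exp (- (N * lam * s0 * (1 - \<rho>))) = exp (- c1 * sqrt lam)"
        unfolding mu c1_def by (simp add: algebra_simps)
      have "?err \<le> ?B * (2 * N * s0) + ?S * (?D1 + ?D2) + ?S * (\<bar>?D1\<bar> + \<bar>?D2\<bar>)"
        using core[OF FK FP v lam t s0 C, of x] by (simp add: N_def)
      also have "\<dots> = ?B * (2 * N * s0) + 2 * ?S * (?D1 + ?D2)" using D by simp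
      also have "\<dots> \<le> ?B * (K * s0) + 2 * ?S * (2 * exp (- c1 * sqrt lam))"
      proof (intro add_mono mult_left_mono)
        show "2 * N * s0 \<le> K * s0" using K(3) s0 by (intro mult_right_mono) auto
        show "?D1 + ?D2 \<le> 2 * exp (- c1 * sqrt lam)" using D(3) ee by simp
      qed (use B0 S0 in auto)
      also have "\<dots> \<le> ?B * (K * (s0 + exp (- c1 * sqrt lam))) + ?S * (K * (s0 + exp (- c1 * sqrt lam)))"
      proof -
        have k1: "K * s0 \<le> K * (s0 + exp (- c1 * sqrt lam))" using K(1) ex0 by (intro mult_left_mono) auto
        have e1: "?B * (K * s0) \<le> ?B * (K * (s0 + exp (- c1 * sqrt lam)))"
          using k1 B0 by (rule mult_left_mono)
        have "4 * exp (- c1 * sqrt lam) \<le> K * exp (- c1 * sqrt lam)" using K(4) ex0 by (intro mult_right_mono) auto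
        also have "\<dots> \<le> K * (s0 + exp (- c1 * sqrt lam))" using K(1) s0 by (intro mult_left_mono) auto
        finally have k2: "4 * exp (- c1 * sqrt lam) \<le> K * (s0 + exp (- c1 * sqrt lam))" .
        have e2: "?S * (4 * exp (- c1 * sqrt lam)) \<le> ?S * (K * (s0 + exp (- c1 * sqrt lam)))"
          using k2 S0 by (rule mult_left_mono)
        have "2 * ?S * (2 * exp (- c1 * sqrt lam)) = ?S * (4 * exp (- c1 * sqrt lam))" by simp
        then show ?thesis using e1 e2 by linarith
      qed
      also have "\<dots> = K * C1norm f f' * (1 / sqrt lam + exp (- c1 * sqrt lam))"
        unfolding nf s0_def by (rule arith1)
      finally show ?thesis .
    next
      case False
      have ps: "prob_space M" using FP by (simp add: fast_process_def)
      have q01: "0 \<le> ?q" "?q \<le> 1" using q_01[OF FK v] by auto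
      have i1: "\<bar>integral\<^sup>L M (\<lambda>\<omega>. f (slow_process V x t \<omega>))\<bar> \<le> ?S"
        by (rule int_bound_prob[OF ps]) (rule abs_le_SUP[OF bf])
      have i2: "\<bar>?q * f (x - t *\<^sub>R ones) + (1 - ?q) * f (x + t *\<^sub>R ones)\<bar> \<le> ?S"
      proof -
        have "\<bar>?q * f (x - t *\<^sub>R ones) + (1 - ?q) * f (x + t *\<^sub>R ones)\<bar>
              \<le> ?q * \<bar>f (x - t *\<^sub>R ones)\<bar> + (1 - ?q) * \<bar>f (x + t *\<^sub>R ones)\<bar>"
          using q01 by (intro order_trans[OF abs_triangle_ineq]) (simp add: abs_mult)
        also have "\<dots> \<le> ?q * ?S + (1 - ?q) * ?S"
          using q01 by (intro add_mono mult_left_mono abs_le_SUP[OF bf]) auto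
        also have "?q * ?S + (1 - ?q) * ?S = ?S" by (simp add: algebra_simps)
        finally show ?thesis .
      qed
      have "?err \<le> \<bar>integral\<^sup>L M (\<lambda>\<omega>. f (slow_process V x t \<omega>))\<bar> + \<bar>?q * f (x - t *\<^sub>R ones) + (1 - ?q) * f (x + t *\<^sub>R ones)\<bar>"
        by (rule abs_triangle_ineq4)
      also have "\<dots> \<le> 2 * ?S" using i1 i2 by linarith
      also have "\<dots> \<le> (2 / t) * (1 / sqrt lam) * ?S"
      proof -
        have "t < 1 / sqrt lam" using False by simp
        then have tl: "t * sqrt lam < 1" using sl by (simp add: field_simps)
        have tp: "0 < t * sqrt lam" using t sl by simp
        have "2 \<le> 2 / (t * sqrt lam)" using tl tp by (simp add: le_divide_eq)
        then have "2 \<le> (2 / t) * (1 / sqrt lam)" by simp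
        then show ?thesis using S0 by (intro mult_right_mono) auto
      qed
      also have "\<dots> \<le> K * C1norm f f' * (1 / sqrt lam + exp (- c1 * sqrt lam))"
      proof -
        have a: "(2 / t) * (1 / sqrt lam) \<le> K * (1 / sqrt lam + exp (- c1 * sqrt lam))"
        proof -
          have "(2 / t) * (1 / sqrt lam) \<le> K * (1 / sqrt lam)" using K(2) sl by (intro mult_right_mono) auto
          also have "\<dots> \<le> K * (1 / sqrt lam + exp (- c1 * sqrt lam))" using K(1) ex0 by (intro mult_left_mono) auto
          finally show ?thesis .
        qed
        have "(2 / t) * (1 / sqrt lam) * ?S \<le> K * (1 / sqrt lam + exp (- c1 * sqrt lam)) * ?S"
          using a S0 by (rule mult_right_mono)
        also have "\<dots> \<le> K * (1 / sqrt lam + exp (- c1 * sqrt lam)) * (?S + ?B)"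
          using K(1) sl ex0 B0 by (intro mult_left_mono) auto
        finally have X: "(2 / t) * (1 / sqrt lam) * ?S \<le> K * (1 / sqrt lam + exp (- c1 * sqrt lam)) * (?S + ?B)" .
        have "K * (1 / sqrt lam + exp (- c1 * sqrt lam)) * (?S + ?B) = K * (?S + ?B) * (1 / sqrt lam + exp (- c1 * sqrt lam))"
          by (simp only: mult_ac)
        then show ?thesis using X unfolding nf by linarith
      qed
      finally show ?thesis .
    qed
  qed
qed


end
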